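(* Let $\succeq$ be a preference order on $\mathcal L^\infty(\Omega,\mathcal F)$ satisfying (SM), (PC) and (ST), let $\mathcal G\subseteq\mathcal F$ be a sub-$\sigma$-algebra and $f\in\mathcal L^\infty(\Omega,\mathcal F)$. Then $\mathfrak m(f\mid\mathcal G)\neq\varnothing$, and for any $g,\tilde g\in\mathfrak m(f\mid\mathcal G)$ one has $\{g\neq\tilde g\}\in\mathcal N_\succeq$.
   Context: $\mathcal L^\infty(\Omega,\mathcal F)$: bounded $\mathcal F$-measurable real functions. Preference order: complete transitive relation; $\succ,\sim$ as usual. Null events $\mathcal N_\succeq=\{A\in\mathcal F: f1_A+g1_{A^c}\sim g\ \forall f,g\}$. (SM): for $A\notin\mathcal N_\succeq$, every $f$ and constants $x>y$: $x1_A+f1_{A^c}\succ y1_A+f1_{A^c}$. (ST): if $f1_A+h1_{A^c}\succeq g1_A+h1_{A^c}$ then $f1_A+\tilde h1_{A^c}\succeq g1_A+\tilde h1_{A^c}$ for every $\tilde h$. (PC): for uniformly bounded $f_n\to f$ pointwise and $g\succ f$ (resp. $f\succ g$) there is $N$ with $g\succ f_n$ (resp. $f_n\succ g$) for $n>N$. Conditional Chisini mean: $\mathfrak m(f\mid\mathcal G)=\{g\in\mathcal L^\infty(\Omega,\mathcal G): f1_A\sim g1_A\ \forall A\in\mathcal G\}$. *)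

theory Defs
  imports "HOL-Probability.Probability"
begin

text \<open>The measurable space (Omega, F) is represented by a measure M:
  Omega = space M, F = sets M (only the sigma-algebra of M is used).
  Elements of L-infinity(Omega,F): bounded F-measurable real functions on Omega,
  represented extensionally (value 0 outside Omega).\<close>

definition Linf :: "'a measure \<Rightarrow> ('a \<Rightarrow> real) set" where
  "Linf M = {f. f \<in> borel_measurable M \<and> bounded (f ` space M) \<and>
                 (\<forall>x. x \<notin> space M \<longrightarrow> f x = 0)}"

definition paste :: "'a measure \<Rightarrow> 'a set \<Rightarrow> ('a \<Rightarrow> real) \<Rightarrow> ('a \<Rightarrow> real) \<Rightarrow> 'a \<Rightarrow> real" where
  "paste M A f g = (\<lambda>x. f x * indicator A x + g x * indicator (space M - A) x)"

definition restr :: "'a set \<Rightarrow> ('a \<Rightarrow> real) \<Rightarrow> 'a \<Rightarrow> real" where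
  "restr A f = (\<lambda>x. f x * indicator A x)"

definition preference_order :: "'a measure \<Rightarrow> (('a \<Rightarrow> real) \<Rightarrow> ('a \<Rightarrow> real) \<Rightarrow> bool) \<Rightarrow> bool" where
  "preference_order M pr \<longleftrightarrow>
     (\<forall>f\<in>Linf M. \<forall>g\<in>Linf M. pr f g \<or> pr g f) \<and>
     (\<forall>f\<in>Linf M. \<forall>g\<in>Linf M. \<forall>h\<in>Linf M. pr f g \<longrightarrow> pr g h \<longrightarrow> pr f h)"

definition strict_pref :: "(('a \<Rightarrow> real) \<Rightarrow> ('a \<Rightarrow> real) \<Rightarrow> bool) \<Rightarrow> ('a \<Rightarrow> real) \<Rightarrow> ('a \<Rightarrow> real) \<Rightarrow> bool" where
  "strict_pref pr f g \<longleftrightarrow> pr f g \<and> \<not> pr g f"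

definition indiff :: "(('a \<Rightarrow> real) \<Rightarrow> ('a \<Rightarrow> real) \<Rightarrow> bool) \<Rightarrow> ('a \<Rightarrow> real) \<Rightarrow> ('a \<Rightarrow> real) \<Rightarrow> bool" where
  "indiff pr f g \<longleftrightarrow> pr f g \<and> pr g f"

definition null_events :: "'a measure \<Rightarrow> (('a \<Rightarrow> real) \<Rightarrow> ('a \<Rightarrow> real) \<Rightarrow> bool) \<Rightarrow> 'a set set" where
  "null_events M pr = {A \<in> sets M. \<forall>f\<in>Linf M. \<forall>g\<in>Linf M. indiff pr (paste M A f g) g}"

definition SM :: "'a measure \<Rightarrow> (('a \<Rightarrow> real) \<Rightarrow> ('a \<Rightarrow> real) \<Rightarrow> bool) \<Rightarrow> bool" where
  "SM M pr \<longleftrightarrow> (\<forall>A\<in>sets M. A \<notin> null_events M pr \<longrightarrow>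
     (\<forall>f\<in>Linf M. \<forall>x y::real. x > y \<longrightarrow>
        strict_pref pr (paste M A (\<lambda>_. x) f) (paste M A (\<lambda>_. y) f)))"

definition ST :: "'a measure \<Rightarrow> (('a \<Rightarrow> real) \<Rightarrow> ('a \<Rightarrow> real) \<Rightarrow> bool) \<Rightarrow> bool" where
  "ST M pr \<longleftrightarrow> (\<forall>A\<in>sets M. \<forall>f\<in>Linf M. \<forall>g\<in>Linf M. \<forall>h\<in>Linf M. \<forall>h'\<in>Linf M.
     pr (paste M A f h) (paste M A g h) \<longrightarrow> pr (paste M A f h') (paste M A g h'))"

definition PC :: "'a measure \<Rightarrow> (('a \<Rightarrow> real) \<Rightarrow> ('a \<Rightarrow> real) \<Rightarrow> bool) \<Rightarrow> bool" where
  "PC M pr \<longleftrightarrow> (\<forall>fs f g. (\<forall>n. fs n \<in> Linf M) \<longrightarrow> f \<in> Linf M \<longrightarrow> g \<in> Linf M \<longrightarrow>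
     (\<exists>C. \<forall>n. \<forall>x\<in>space M. \<bar>fs n x\<bar> \<le> C) \<longrightarrow>
     (\<forall>x\<in>space M. (\<lambda>n. fs n x) \<longlonglongrightarrow> f x) \<longrightarrow>
     (strict_pref pr g f \<longrightarrow> (\<exists>N. \<forall>n>N. strict_pref pr g (fs n))) \<and>
     (strict_pref pr f g \<longrightarrow> (\<exists>N. \<forall>n>N. strict_pref pr (fs n) g)))"

text \<open>Conditional Chisini mean m(f | G), G given by the sub-sigma-algebra measure N.\<close>
definition chisini :: "'a measure \<Rightarrow> (('a \<Rightarrow> real) \<Rightarrow> ('a \<Rightarrow> real) \<Rightarrow> bool) \<Rightarrow> ('a \<Rightarrow> real) \<Rightarrow> ('a \<Rightarrow> real) set" where
  "chisini N pr f = {g \<in> Linf N. \<forall>A\<in>sets N. indiff pr (restr A f) (restr A g)}"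

end

theory Submission
  imports Defs
begin

definition cst :: "'a measure \<Rightarrow> real \<Rightarrow> 'a \<Rightarrow> real" where
  "cst M c = (\<lambda>x. c * indicator (space M) x)"

lemma Linf_bounded: "f \<in> Linf M \<Longrightarrow> \<exists>R\<ge>0. \<forall>x\<in>space M. \<bar>f x\<bar> \<le> R"
  unfolding Linf_def bounded_iff by (auto simp: image_iff) (metis abs_ge_zero order.trans real_norm_def)

lemma LinfI:
  assumes "f \<in> borel_measurable M" "\<And>x. x \<in> space M \<Longrightarrow> \<bar>f x\<bar> \<le> R" "\<And>x. x \<notin> space M \<Longrightarrow> f x = 0"
  shows "f \<in> Linf M"
  unfolding Linf_def bounded_iff using assms by auto

lemma Linf_meas: "f \<in> Linf M \<Longrightarrow> f \<in> borel_measurable M" by (simp add: Linf_def)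
lemma Linf_out: "f \<in> Linf M \<Longrightarrow> x \<notin> space M \<Longrightarrow> f x = 0" by (simp add: Linf_def)

lemma zero_Linf: "(\<lambda>_. 0) \<in> Linf M"
  by (rule LinfI[where R=0]) auto

lemma cst_Linf: "cst M c \<in> Linf M"
  unfolding cst_def
proof (rule LinfI[where R="\<bar>c\<bar>"])
  show "(\<lambda>x. c * indicator (space M) x) \<in> borel_measurable M" by measurable
qed (auto simp: indicator_def)

lemma restr_Linf: assumes "f \<in> Linf M" "A \<in> sets M" shows "restr A f \<in> Linf M"
proof -
  obtain R where R: "\<forall>x\<in>space M. \<bar>f x\<bar> \<le> R" "R \<ge> 0" using Linf_bounded[OF assms(1)] by auto
  show ?thesis unfolding restr_def
  proof (rule LinfI[where R=R])
    have [measurable]: "f \<in> borel_measurable M" "A \<in> sets M"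
      using assms Linf_meas by auto
    show "(\<lambda>x. f x * indicator A x) \<in> borel_measurable M"
      by measurable
    fix x assume "x \<in> space M"
    then show "\<bar>f x * indicator A x\<bar> \<le> R"
      using R by (cases "x \<in> A") (auto simp: indicator_def)
  next
    fix x assume "x \<notin> space M"
    then show "f x * indicator A x = 0"
      using Linf_out assms by auto
  qed
qed

lemma paste_Linf: assumes "f \<in> Linf M" "g \<in> Linf M" "A \<in> sets M" shows "paste M A f g \<in> Linf M"
proof -
  obtain R where R: "\<forall>x\<in>space M. \<bar>f x\<bar> \<le> R" "R \<ge> 0" using Linf_bounded[OF assms(1)] by auto
  obtain S where S: "\<forall>x\<in>space M. \<bar>g x\<bar> \<le> S" "S \<ge> 0" using Linf_bounded[OF assms(2)] by auto
  show ?thesis unfolding paste_def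
  proof (rule LinfI[where R="R+S"])
    have [measurable]: "f \<in> borel_measurable M" "g \<in> borel_measurable M" "A \<in> sets M"
      using assms Linf_meas by auto
    show "(\<lambda>x. f x * indicator A x + g x * indicator (space M - A) x) \<in> borel_measurable M"
      by measurable
    fix x assume "x \<in> space M"
    then show "\<bar>f x * indicator A x + g x * indicator (space M - A) x\<bar> \<le> R + S"
      using R S by (cases "x \<in> A") (auto simp: indicator_def)
  next
    fix x assume "x \<notin> space M"
    then show "f x * indicator A x + g x * indicator (space M - A) x = 0"
      using Linf_out assms by auto
  qed
qed

lemma restr_space: assumes "f \<in> Linf M" shows "restr (space M) f = f"
proof (rule ext)
  fix x show "restr (space M) f x = f x" using Linf_out[OF assms, of x] by (cases "x \<in> space M") (auto simp: restr_def)
qed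

lemma Linf_sub: assumes "subalgebra M N" "f \<in> Linf N" shows "f \<in> Linf M"
proof -
  have sp: "space N = space M" using assms(1) by (simp add: subalgebra_def)
  have "f \<in> borel_measurable M" using measurable_from_subalg[OF assms(1)] Linf_meas[OF assms(2)] by blast
  then show ?thesis using assms(2) unfolding Linf_def sp by blast
qed

lemma sets_sub: "subalgebra M N \<Longrightarrow> A \<in> sets N \<Longrightarrow> A \<in> sets M"
  by (auto simp: subalgebra_def)

lemma paste_zero: "paste M A f (\<lambda>_. 0) = restr A f"
  unfolding paste_def restr_def by auto

lemma restr_empty: "restr {} f = (\<lambda>_. 0)" unfolding restr_def by auto

locale pref =
  fixes M :: "'a measure" and pr :: "('a \<Rightarrow> real) \<Rightarrow> ('a \<Rightarrow> real) \<Rightarrow> bool"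
  assumes po: "preference_order M pr" and sm: "SM M pr" and pc: "PC M pr" and st: "ST M pr"
  and nonnull: "space M \<notin> null_events M pr"
begin

abbreviation "L \<equiv> Linf M"

lemma total: "f \<in> L \<Longrightarrow> g \<in> L \<Longrightarrow> pr f g \<or> pr g f"
  using po unfolding preference_order_def by blast
lemma trans: "pr f g \<Longrightarrow> pr g h \<Longrightarrow> f \<in> L \<Longrightarrow> g \<in> L \<Longrightarrow> h \<in> L \<Longrightarrow> pr f h"
  using po unfolding preference_order_def by blast
lemma refl: "f \<in> L \<Longrightarrow> pr f f" using total by blast

lemma lim_ge:
  assumes fs: "\<And>n. fs n \<in> L" and f: "f \<in> L" and k: "k \<in> L"
    and B: "\<And>n x. x \<in> space M \<Longrightarrow> \<bar>fs n x\<bar> \<le> C"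
    and conv: "\<And>x. x \<in> space M \<Longrightarrow> (\<lambda>n. fs n x) \<longlonglongrightarrow> f x"
    and ge: "\<And>n. pr (fs n) k"
  shows "pr f k"
proof (rule ccontr)
  assume "\<not> pr f k"
  then have "strict_pref pr k f" using total[OF f k] by (auto simp: strict_pref_def)
  moreover have "\<exists>C. \<forall>n. \<forall>x\<in>space M. \<bar>fs n x\<bar> \<le> C" using B by blast
  ultimately obtain N where "\<forall>n>N. strict_pref pr k (fs n)"
    using pc[unfolded PC_def, rule_format, of fs f k] fs f k conv by blast
  then show False using ge[of "Suc N"] by (auto simp: strict_pref_def)
qed

lemma lim_le:
  assumes fs: "\<And>n. fs n \<in> L" and f: "f \<in> L" and k: "k \<in> L"
    and B: "\<And>n x. x \<in> space M \<Longrightarrow> \<bar>fs n x\<bar> \<le> C"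
    and conv: "\<And>x. x \<in> space M \<Longrightarrow> (\<lambda>n. fs n x) \<longlonglongrightarrow> f x"
    and le: "\<And>n. pr k (fs n)"
  shows "pr k f"
proof (rule ccontr)
  assume "\<not> pr k f"
  then have "strict_pref pr f k" using total[OF f k] by (auto simp: strict_pref_def)
  moreover have "\<exists>C. \<forall>n. \<forall>x\<in>space M. \<bar>fs n x\<bar> \<le> C" using B by blast
  ultimately obtain N where "\<forall>n>N. strict_pref pr (fs n) k"
    using pc[unfolded PC_def, rule_format, of fs f k] fs f k conv by blast
  then show False using le[of "Suc N"] by (auto simp: strict_pref_def)
qed

lemma two_agg:
  assumes X: "X \<in> sets M" and Y: "Y \<in> sets M" and d: "X \<inter> Y = {}"
    and a: "a \<in> L" and b: "b \<in> L"
    and hX: "pr (restr X a) (restr X b)" and hY: "pr (restr Y a) (restr Y b)"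
  shows "pr (restr (X \<union> Y) a) (restr (X \<union> Y) b)"
proof -
  have sX: "X \<subseteq> space M" and sY: "Y \<subseteq> space M" using X Y sets.sets_into_space by auto
  have rYa: "restr Y a \<in> L" and rXb: "restr X b \<in> L" using restr_Linf a b X Y by auto
  have 1: "pr (paste M X a (restr Y a)) (paste M X b (restr Y a))"
    using st[unfolded ST_def, rule_format, OF X a b zero_Linf rYa] hX by (simp add: paste_zero)
  have 2: "pr (paste M Y a (restr X b)) (paste M Y b (restr X b))"
    using st[unfolded ST_def, rule_format, OF Y a b zero_Linf rXb] hY by (simp add: paste_zero)
  have e1: "paste M X a (restr Y a) = restr (X \<union> Y) a"
    using sY d by (intro ext) (auto simp: paste_def restr_def indicator_def)
  have e2: "paste M X b (restr Y a) = paste M Y a (restr X b)"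
    using sY sX d by (intro ext) (auto simp: paste_def restr_def indicator_def)
  have e3: "paste M Y b (restr X b) = restr (X \<union> Y) b"
    using sX d by (intro ext) (auto simp: paste_def restr_def indicator_def)
  have m: "restr (X \<union> Y) a \<in> L" "paste M Y a (restr X b) \<in> L" "restr (X \<union> Y) b \<in> L"
    using a b X Y rXb by (auto intro!: restr_Linf paste_Linf)
  have "pr (restr (X \<union> Y) a) (paste M Y a (restr X b))" using 1 e1 e2 by simp
  from trans[OF this 2[unfolded e3] m] show ?thesis .
qed

end


lemma restr_cst: "B \<subseteq> space M \<Longrightarrow> restr B (cst M c) = (\<lambda>x. c * indicator B x)"
  by (intro ext) (auto simp: restr_def cst_def indicator_def)

lemma restr_cst': "B \<subseteq> space M \<Longrightarrow> restr B (cst M c) = restr B (\<lambda>_. c)"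
  by (intro ext) (auto simp: restr_def cst_def indicator_def)

lemma paste_const: "B \<subseteq> space M \<Longrightarrow> paste M B (\<lambda>_. x) h = paste M B (cst M x) h"
  by (intro ext) (auto simp: paste_def cst_def indicator_def)

context pref begin

lemma null_sets: "A \<in> null_events M pr \<Longrightarrow> A \<in> sets M"
  by (simp add: null_events_def)

lemma null_paste: "A \<in> null_events M pr \<Longrightarrow> f \<in> L \<Longrightarrow> g \<in> L \<Longrightarrow> indiff pr (paste M A f g) g"
  by (simp add: null_events_def)

lemma null_restr0: assumes "A \<in> null_events M pr" "a \<in> L" shows "indiff pr (restr A a) (\<lambda>_. 0)"
  using null_paste[OF assms zero_Linf] by (simp add: paste_zero)

lemma null_restr: assumes "A \<in> null_events M pr" "a \<in> L" "b \<in> L" shows "pr (restr A a) (restr A b)"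
proof -
  have A: "A \<in> sets M" using null_sets assms by auto
  show ?thesis using null_restr0[OF assms(1,2)] null_restr0[OF assms(1,3)]
      trans[of "restr A a" "\<lambda>_. 0" "restr A b"] restr_Linf[OF assms(2) A] restr_Linf[OF assms(3) A] zero_Linf
    by (auto simp: indiff_def)
qed

lemma null_empty: "{} \<in> null_events M pr"
proof -
  have "paste M {} f g = g" if "g \<in> L" for f g
    using Linf_out[OF that] by (intro ext) (auto simp: paste_def indicator_def)
  then show ?thesis unfolding null_events_def indiff_def using refl by auto
qed

lemma null_subset: assumes "B \<in> sets M" "B \<subseteq> A" "A \<in> null_events M pr" shows "B \<in> null_events M pr"
proof -
  have A: "A \<in> sets M" using null_sets assms by auto
  have sA: "A \<subseteq> space M" using sets.sets_into_space[OF A] .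
  have "indiff pr (paste M B f g) g" if f: "f \<in> L" and g: "g \<in> L" for f g
  proof -
    have "paste M B f g = paste M A (paste M B f g) g"
      using assms(2) sA by (intro ext) (auto simp: paste_def indicator_def)
    then show ?thesis using null_paste[OF assms(3) paste_Linf[OF f g assms(1)] g] by simp
  qed
  then show ?thesis using assms(1) unfolding null_events_def by auto
qed

lemma null_Un: assumes "A \<in> null_events M pr" "B \<in> null_events M pr" shows "A \<union> B \<in> null_events M pr"
proof -
  have A: "A \<in> sets M" and B: "B \<in> sets M" using null_sets assms by auto
  have sA: "A \<subseteq> space M" using sets.sets_into_space[OF A] .
  have sB: "B \<subseteq> space M" using sets.sets_into_space[OF B] .
  have "indiff pr (paste M (A \<union> B) f g) g" if f: "f \<in> L" and g: "g \<in> L" for f g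
  proof -
    have e: "paste M (A \<union> B) f g = paste M A f (paste M B f g)"
      using sA sB by (intro ext) (auto simp: paste_def indicator_def)
    have p: "paste M B f g \<in> L" using paste_Linf f g B by auto
    have 1: "indiff pr (paste M A f (paste M B f g)) (paste M B f g)" using null_paste[OF assms(1) f p] .
    have 2: "indiff pr (paste M B f g) g" using null_paste[OF assms(2) f g] .
    show ?thesis unfolding e using 1 2 trans paste_Linf[OF f p A] p g by (auto simp: indiff_def)
  qed
  then show ?thesis using A B unfolding null_events_def by auto
qed

lemma null_UN_finite: "(\<And>i. i < (n::nat) \<Longrightarrow> A i \<in> null_events M pr) \<Longrightarrow> (\<Union>i<n. A i) \<in> null_events M pr"
proof (induction n)
  case 0 then show ?case using null_empty by simp
next
  case (Suc n)
  have "(\<Union>i<Suc n. A i) = A n \<union> (\<Union>i<n. A i)" by (auto simp: lessThan_Suc)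
  then show ?case using Suc null_Un by auto
qed

lemma null_UN: fixes A :: "nat \<Rightarrow> 'a set" assumes N: "\<And>i. A i \<in> null_events M pr" shows "(\<Union>i. A i) \<in> null_events M pr"
proof -
  have As: "A i \<in> sets M" for i using null_sets N by auto
  have U: "(\<Union>i. A i) \<in> sets M" using As by (intro sets.countable_UN) auto
  have sU: "(\<Union>i. A i) \<subseteq> space M" using sets.sets_into_space[OF U] .
  have "indiff pr (paste M (\<Union>i. A i) f g) g" if f: "f \<in> L" and g: "g \<in> L" for f g
  proof -
    obtain Rf where Rf: "\<forall>x\<in>space M. \<bar>f x\<bar> \<le> Rf" "Rf \<ge> 0" using Linf_bounded[OF f] by auto
    obtain Rg where Rg: "\<forall>x\<in>space M. \<bar>g x\<bar> \<le> Rg" "Rg \<ge> 0" using Linf_bounded[OF g] by auto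
    define fs where "fs n = paste M (\<Union>i<n. A i) f g" for n
    have Un: "(\<Union>i<n. A i) \<in> sets M" for n using As by (intro sets.finite_UN) auto
    have fsL: "fs n \<in> L" for n unfolding fs_def using paste_Linf[OF f g Un] .
    have ind: "indiff pr (fs n) g" for n unfolding fs_def using null_paste[OF null_UN_finite f g] N by blast
    have B: "\<bar>fs n x\<bar> \<le> Rf + Rg" if "x \<in> space M" for n x
      using Rf Rg that unfolding fs_def paste_def by (cases "x \<in> (\<Union>i<n. A i)") (auto simp: indicator_def)
    have conv: "(\<lambda>n. fs n x) \<longlonglongrightarrow> paste M (\<Union>i. A i) f g x" if "x \<in> space M" for x
    proof (cases "x \<in> (\<Union>i. A i)")
      case True
      then obtain i where i: "x \<in> A i" by auto
      have "eventually (\<lambda>n. fs n x = paste M (\<Union>i. A i) f g x) sequentially"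
        using i that unfolding fs_def paste_def eventually_sequentially
        by (intro exI[of _ "Suc i"]) (auto simp: indicator_def)
      then show ?thesis by (rule tendsto_eventually)
    next
      case False
      then have "fs n x = paste M (\<Union>i. A i) f g x" for n
        unfolding fs_def paste_def by (auto simp: indicator_def)
      then show ?thesis by simp
    qed
    have pL: "paste M (\<Union>i. A i) f g \<in> L" using paste_Linf[OF f g U] .
    have 1: "pr (paste M (\<Union>i. A i) f g) g"
      by (rule lim_ge[OF fsL pL g B conv]) (use ind in \<open>auto simp: indiff_def\<close>)
    have 2: "pr g (paste M (\<Union>i. A i) f g)"
      by (rule lim_le[OF fsL pL g B conv]) (use ind in \<open>auto simp: indiff_def\<close>)
    show ?thesis using 1 2 by (simp add: indiff_def)
  qed
  then show ?thesis using U unfolding null_events_def by auto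
qed

lemma null_UN_countable:
  assumes "countable I" "\<And>i. i \<in> I \<Longrightarrow> A i \<in> null_events M pr"
  shows "(\<Union>i\<in>I. A i) \<in> null_events M pr"
proof (cases "I = {}")
  case True then show ?thesis using null_empty by simp
next
  case False
  have "(\<Union>i\<in>I. A i) = (\<Union>n. A (from_nat_into I n))"
    using range_from_nat_into[OF False assms(1)] by (metis image_image)
  also have "\<dots> \<in> null_events M pr"
    by (rule null_UN) (use assms(2) from_nat_into[OF False] in auto)
  finally show ?thesis .
qed

lemma strict_cst:
  assumes B: "B \<in> sets M" "B \<notin> null_events M pr" and xy: "y < x"
  shows "strict_pref pr (restr B (cst M x)) (restr B (cst M y))"
proof -
  have sB: "B \<subseteq> space M" using sets.sets_into_space[OF B(1)] .
  have "strict_pref pr (paste M B (\<lambda>_. x) (\<lambda>_. 0)) (paste M B (\<lambda>_. y) (\<lambda>_. 0))"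
    using sm[unfolded SM_def, rule_format, OF B zero_Linf xy] .
  then show ?thesis using sB by (simp add: paste_zero restr_cst')
qed

lemma cst_mono:
  assumes B: "B \<in> sets M" and xy: "y \<le> x"
  shows "pr (restr B (cst M x)) (restr B (cst M y))"
proof (cases "B \<in> null_events M pr")
  case True then show ?thesis using null_restr[OF True cst_Linf cst_Linf] by simp
next
  case False
  show ?thesis
  proof (cases "x = y")
    case True then show ?thesis using refl restr_Linf[OF cst_Linf B] by simp
  next
    case False
    then show ?thesis using strict_cst[OF B \<open>B \<notin> _\<close>] xy by (auto simp: strict_pref_def)
  qed
qed

lemma finite_agg:
  assumes "finite V" "\<And>v. v \<in> V \<Longrightarrow> X v \<in> sets M" "disjoint_family_on X V"
    and a: "a \<in> L" and b: "b \<in> L"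
    and h: "\<And>v. v \<in> V \<Longrightarrow> pr (restr (X v) a) (restr (X v) b)"
  shows "pr (restr (\<Union>v\<in>V. X v) a) (restr (\<Union>v\<in>V. X v) b)"
  using assms(1-3) h
proof (induction V rule: finite_induct)
  case empty
  then show ?case using refl[OF zero_Linf] by (simp add: restr_empty)
next
  case (insert v F)
  have d: "X v \<inter> (\<Union>w\<in>F. X w) = {}"
    using insert.prems(2) insert.hyps(2) unfolding disjoint_family_on_def by auto
  have IH: "pr (restr (\<Union>w\<in>F. X w) a) (restr (\<Union>w\<in>F. X w) b)"
    using insert by (auto simp: disjoint_family_on_def)
  have "(\<Union>w\<in>F. X w) \<in> sets M" using insert by auto
  then show ?case using two_agg[OF _ _ d a b _ IH] insert by auto
qed

lemma count_agg:
  fixes X :: "nat \<Rightarrow> 'a set"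
  assumes X: "\<And>n. X n \<in> sets M" and d: "disjoint_family X"
    and a: "a \<in> L" and b: "b \<in> L"
    and h: "\<And>n. pr (restr (X n) a) (restr (X n) b)"
  shows "pr (restr (\<Union>n. X n) a) (restr (\<Union>n. X n) b)"
proof -
  define U where "U = (\<Union>n. X n)"
  define Vn where "Vn n = (\<Union>i<n. X i)" for n
  have U: "U \<in> sets M" unfolding U_def using X by (intro sets.countable_UN) auto
  have VnM: "Vn n \<in> sets M" for n unfolding Vn_def using X by (intro sets.finite_UN) auto
  have sU: "U \<subseteq> space M" using sets.sets_into_space[OF U] .
  obtain Ra where Ra: "\<forall>x\<in>space M. \<bar>a x\<bar> \<le> Ra" "Ra \<ge> 0" using Linf_bounded[OF a] by auto
  obtain Rb where Rb: "\<forall>x\<in>space M. \<bar>b x\<bar> \<le> Rb" "Rb \<ge> 0" using Linf_bounded[OF b] by auto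
  have fin: "pr (restr (Vn n) a) (restr (Vn n) b)" for n
    unfolding Vn_def
    by (rule finite_agg) (use X d a b h in \<open>auto simp: disjoint_family_on_def\<close>)
  have rUb: "restr U b \<in> L" using restr_Linf[OF b U] .
  define fs where "fs n = paste M (Vn n) a (restr U b)" for n
  have fsL: "fs n \<in> L" for n unfolding fs_def using paste_Linf[OF a rUb VnM] .
  have step: "pr (fs n) (paste M (Vn n) b (restr U b))" for n
    using st[unfolded ST_def, rule_format, OF VnM a b zero_Linf rUb] fin[of n]
    unfolding fs_def by (simp add: paste_zero)
  have e: "paste M (Vn n) b (restr U b) = restr U b" for n
    using sU unfolding Vn_def U_def by (intro ext) (auto simp: paste_def restr_def indicator_def)
  have ge: "pr (fs n) (restr U b)" for n using step[of n] e[of n] by simp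
  have B: "\<bar>fs n x\<bar> \<le> Ra + Rb" if "x \<in> space M" for n x
    using Ra Rb that unfolding fs_def paste_def restr_def
    by (cases "x \<in> Vn n"; cases "x \<in> U") (auto simp: indicator_def)
  have conv: "(\<lambda>n. fs n x) \<longlonglongrightarrow> restr U a x" if "x \<in> space M" for x
  proof (cases "x \<in> U")
    case True
    then obtain i where i: "x \<in> X i" unfolding U_def by auto
    have "eventually (\<lambda>n. fs n x = restr U a x) sequentially"
      using i True that unfolding fs_def paste_def restr_def eventually_sequentially Vn_def
      by (intro exI[of _ "Suc i"]) (auto simp: indicator_def)
    then show ?thesis by (rule tendsto_eventually)
  next
    case False
    then have "x \<notin> Vn n" for n unfolding U_def Vn_def by auto
    then have "fs n x = restr U a x" for n
      using False unfolding fs_def paste_def restr_def by (auto simp: indicator_def)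
    then show ?thesis by simp
  qed
  show ?thesis
    unfolding U_def[symmetric]
    by (rule lim_ge[OF fsL restr_Linf[OF a U] rUb B conv ge])
qed

end


definition fl :: "nat \<Rightarrow> ('a \<Rightarrow> real) \<Rightarrow> 'a \<Rightarrow> real" where
  "fl n h x = real_of_int \<lfloor>real (Suc n) * h x\<rfloor> / real (Suc n)"

lemma fl_le: "fl n h x \<le> h x"
proof -
  have "real_of_int \<lfloor>real (Suc n) * h x\<rfloor> \<le> real (Suc n) * h x" by simp
  then show ?thesis unfolding fl_def by (simp add: divide_le_eq mult.commute)
qed

lemma fl_gt: "h x - inverse (real (Suc n)) < fl n h x"
proof -
  have "real (Suc n) * h x < real_of_int \<lfloor>real (Suc n) * h x\<rfloor> + 1" by simp
  then have "h x < (real_of_int \<lfloor>real (Suc n) * h x\<rfloor> + 1) / real (Suc n)"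
    by (simp add: less_divide_eq mult.commute)
  then show ?thesis unfolding fl_def by (simp add: add_divide_distrib inverse_eq_divide)
qed

lemma fl_zero: "h x = 0 \<Longrightarrow> fl n h x = 0" by (simp add: fl_def)

lemma fl_abs: assumes "\<bar>h x\<bar> \<le> R" shows "\<bar>fl n h x\<bar> \<le> R + 1"
proof -
  have "inverse (real (Suc n)) \<le> 1" by (simp add: inverse_le_1_iff)
  then show ?thesis using fl_le[of n h x] fl_gt[of h x n] assms by linarith
qed

lemma fl_lim: "(\<lambda>n. fl n h x) \<longlonglongrightarrow> h x"
proof (rule real_tendsto_sandwich)
  show "\<forall>\<^sub>F n in sequentially. h x - inverse (real (Suc n)) \<le> fl n h x"
    by (intro always_eventually allI less_imp_le fl_gt)
  show "\<forall>\<^sub>F n in sequentially. fl n h x \<le> h x" by (intro always_eventually allI fl_le)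
  show "(\<lambda>n. h x - inverse (real (Suc n))) \<longlonglongrightarrow> h x"
    using tendsto_diff[OF tendsto_const LIMSEQ_inverse_real_of_nat] by simp
qed simp

lemma fl_meas: assumes "h \<in> borel_measurable N" shows "fl n h \<in> borel_measurable N"
proof -
  have [measurable]: "h \<in> borel_measurable N" using assms .
  show ?thesis unfolding fl_def[abs_def] by measurable
qed

lemma fl_finite: assumes "\<And>x. x \<in> S \<Longrightarrow> \<bar>h x\<bar> \<le> R" shows "finite (fl n h ` S)"
proof -
  let ?m = "real (Suc n)"
  have "fl n h ` S \<subseteq> (\<lambda>k. real_of_int k / ?m) ` {\<lfloor>- (?m * R)\<rfloor> .. \<lfloor>?m * R\<rfloor>}"
  proof
    fix y assume "y \<in> fl n h ` S"
    then obtain x where x: "x \<in> S" "y = fl n h x" by auto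
    have "- R \<le> h x" "h x \<le> R" using assms[OF x(1)] by auto
    then have "?m * (- R) \<le> ?m * h x" "?m * h x \<le> ?m * R"
      using mult_left_mono[of "-R" "h x" ?m] mult_left_mono[of "h x" R ?m] by auto
    then have "- (?m * R) \<le> ?m * h x" "?m * h x \<le> ?m * R" by auto
    then have "\<lfloor>- (?m * R)\<rfloor> \<le> \<lfloor>?m * h x\<rfloor>" "\<lfloor>?m * h x\<rfloor> \<le> \<lfloor>?m * R\<rfloor>" by (auto intro: floor_mono)
    then show "y \<in> (\<lambda>k. real_of_int k / ?m) ` {\<lfloor>- (?m * R)\<rfloor> .. \<lfloor>?m * R\<rfloor>}"
      using x unfolding fl_def by auto
  qed
  then show ?thesis by (rule finite_subset) auto
qed

lemma Linf_uminus: "h \<in> Linf N \<Longrightarrow> (\<lambda>x. - h x) \<in> Linf N"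
  unfolding Linf_def bounded_iff by (auto simp: image_iff)

lemma subalgebra_refl: "subalgebra M M" by (simp add: subalgebra_def)

context pref begin

lemma LC_lower:
  assumes N: "subalgebra M N" and h: "h \<in> Linf N" and A: "A \<in> sets N" and a: "a \<in> L"
    and H: "\<And>B c. B \<in> sets N \<Longrightarrow> B \<subseteq> A \<Longrightarrow> (\<And>x. x \<in> B \<Longrightarrow> c < h x) \<Longrightarrow> pr (restr B a) (restr B (cst M c))"
  shows "pr (restr A a) (restr A h)"
proof -
  have sp: "space N = space M" using N by (simp add: subalgebra_def)
  have AM: "A \<in> sets M" using sets_sub[OF N A] .
  have sA: "A \<subseteq> space M" using sets.sets_into_space[OF AM] .
  have hM: "h \<in> L" using Linf_sub[OF N h] .
  obtain R where R: "\<forall>x\<in>space M. \<bar>h x\<bar> \<le> R" "R \<ge> 0" using Linf_bounded[OF hM] by auto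
  define b where "b n x = (fl n h x - inverse (real (Suc n))) * indicator (space M) x" for n x
  have hmN[measurable]: "h \<in> borel_measurable N" using Linf_meas[OF h] .
  have flN: "fl n h \<in> borel_measurable N" for n using fl_meas[OF hmN] .
  have bB: "\<bar>b n x\<bar> \<le> R + 2" if x: "x \<in> space M" for n x
  proof -
    have e: "b n x = fl n h x - inverse (real (Suc n))" using x by (simp add: b_def)
    have i1: "inverse (real (Suc n)) \<le> 1" by (simp add: inverse_le_1_iff)
    have i0: "inverse (real (Suc n)) \<ge> 0" by simp
    have "\<bar>fl n h x\<bar> \<le> R + 1" using fl_abs[of h x R n] R x by auto
    then show ?thesis unfolding e using i0 i1 by linarith
  qed
  have bL: "b n \<in> L" for n
  proof (rule LinfI[where R="R+2"])
    have "fl n h \<in> borel_measurable M" using measurable_from_subalg[OF N flN] .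
    then show "b n \<in> borel_measurable M" unfolding b_def[abs_def] by measurable
    fix x assume x: "x \<in> space M"
    show "\<bar>b n x\<bar> \<le> R + 2" using bB[OF x] .
  qed (simp add: b_def)
  have step: "pr (restr A a) (restr A (b n))" for n
  proof -
    let ?V = "fl n h ` A"
    define X where "X v = A \<inter> {x \<in> space M. fl n h x = v}" for v
    have XN: "X v \<in> sets N" for v
    proof -
      have "{x \<in> space N. fl n h x = v} \<in> sets N" using flN[of n] by measurable
      then show ?thesis unfolding X_def sp[symmetric] using A by auto
    qed
    have fin: "finite ?V" by (rule fl_finite[where R=R]) (use R sA in auto)
    have U: "(\<Union>v\<in>?V. X v) = A" unfolding X_def using sA by auto
    have "pr (restr (\<Union>v\<in>?V. X v) a) (restr (\<Union>v\<in>?V. X v) (b n))"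
    proof (rule finite_agg[OF fin _ _ a bL])
      show "X v \<in> sets M" for v using sets_sub[OF N XN] .
      show "disjoint_family_on X ?V" unfolding disjoint_family_on_def X_def by auto
      fix v assume v: "v \<in> ?V"
      have e: "restr (X v) (b n) = restr (X v) (cst M (v - inverse (real (Suc n))))"
        unfolding X_def b_def cst_def restr_def by (intro ext) (auto simp: indicator_def)
      have "pr (restr (X v) a) (restr (X v) (cst M (v - inverse (real (Suc n)))))"
      proof (rule H[OF XN])
        show "X v \<subseteq> A" unfolding X_def by auto
        fix x assume "x \<in> X v"
        then have "v = fl n h x" unfolding X_def by auto
        moreover have "0 < inverse (real (Suc n))" by simp
        ultimately show "v - inverse (real (Suc n)) < h x" using fl_le[of n h x] by linarith
      qed
      then show "pr (restr (X v) a) (restr (X v) (b n))" using e by simp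
    qed
    then show ?thesis unfolding U .
  qed
  show ?thesis
  proof (rule lim_le[OF _ restr_Linf[OF hM AM] restr_Linf[OF a AM] _ _ step])
    show "restr A (b n) \<in> L" for n using restr_Linf[OF bL AM] .
    show "\<bar>restr A (b n) x\<bar> \<le> R + 2" if "x \<in> space M" for n x
    proof -
      have "\<bar>b n x\<bar> \<le> R + 2" using bB[OF that] .
      then show ?thesis unfolding restr_def by (auto simp: indicator_def)
    qed
    fix x assume x: "x \<in> space M"
    have "(\<lambda>n. b n x) \<longlonglongrightarrow> (h x - 0) * 1"
      unfolding b_def using x
      by (intro tendsto_mult tendsto_diff fl_lim LIMSEQ_inverse_real_of_nat) auto
    then show "(\<lambda>n. restr A (b n) x) \<longlonglongrightarrow> restr A h x"
      unfolding restr_def by (auto intro: tendsto_mult_right)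
  qed
qed

lemma LC_upper:
  assumes N: "subalgebra M N" and h: "h \<in> Linf N" and A: "A \<in> sets N" and a: "a \<in> L"
    and H: "\<And>B c. B \<in> sets N \<Longrightarrow> B \<subseteq> A \<Longrightarrow> (\<And>x. x \<in> B \<Longrightarrow> h x < c) \<Longrightarrow> pr (restr B (cst M c)) (restr B a)"
  shows "pr (restr A h) (restr A a)"
proof -
  have sp: "space N = space M" using N by (simp add: subalgebra_def)
  have AM: "A \<in> sets M" using sets_sub[OF N A] .
  have sA: "A \<subseteq> space M" using sets.sets_into_space[OF AM] .
  have hM: "h \<in> L" using Linf_sub[OF N h] .
  obtain R where R: "\<forall>x\<in>space M. \<bar>h x\<bar> \<le> R" "R \<ge> 0" using Linf_bounded[OF hM] by auto
  define g where "g x = - h x" for x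
  have gN: "g \<in> Linf N" unfolding g_def using Linf_uminus[OF h] .
  have Rg: "\<forall>x\<in>space M. \<bar>g x\<bar> \<le> R" using R unfolding g_def by auto
  define b where "b n x = (- fl n g x + inverse (real (Suc n))) * indicator (space M) x" for n x
  have gmN[measurable]: "g \<in> borel_measurable N" using Linf_meas[OF gN] .
  have flN: "fl n g \<in> borel_measurable N" for n using fl_meas[OF gmN] .
  have bB: "\<bar>b n x\<bar> \<le> R + 2" if x: "x \<in> space M" for n x
  proof -
    have e: "b n x = - fl n g x + inverse (real (Suc n))" using x by (simp add: b_def)
    have i1: "inverse (real (Suc n)) \<le> 1" by (simp add: inverse_le_1_iff)
    have i0: "inverse (real (Suc n)) \<ge> 0" by simp
    have "\<bar>fl n g x\<bar> \<le> R + 1" using fl_abs[of g x R n] Rg x by auto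
    then show ?thesis unfolding e using i0 i1 by linarith
  qed
  have bL: "b n \<in> L" for n
  proof (rule LinfI[where R="R+2"])
    have "fl n g \<in> borel_measurable M" using measurable_from_subalg[OF N flN] .
    then show "b n \<in> borel_measurable M" unfolding b_def[abs_def] by measurable
    fix x assume x: "x \<in> space M"
    show "\<bar>b n x\<bar> \<le> R + 2" using bB[OF x] .
  qed (simp add: b_def)
  have step: "pr (restr A (b n)) (restr A a)" for n
  proof -
    let ?V = "fl n g ` A"
    define X where "X v = A \<inter> {x \<in> space M. fl n g x = v}" for v
    have XN: "X v \<in> sets N" for v
    proof -
      have "{x \<in> space N. fl n g x = v} \<in> sets N" using flN[of n] by measurable
      then show ?thesis unfolding X_def sp[symmetric] using A by auto
    qed
    have fin: "finite ?V" by (rule fl_finite[where R=R]) (use Rg sA in auto)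
    have U: "(\<Union>v\<in>?V. X v) = A" unfolding X_def using sA by auto
    have "pr (restr (\<Union>v\<in>?V. X v) (b n)) (restr (\<Union>v\<in>?V. X v) a)"
    proof (rule finite_agg[OF fin _ _ bL a])
      show "X v \<in> sets M" for v using sets_sub[OF N XN] .
      show "disjoint_family_on X ?V" unfolding disjoint_family_on_def X_def by auto
      fix v assume v: "v \<in> ?V"
      have e: "restr (X v) (b n) = restr (X v) (cst M (- v + inverse (real (Suc n))))"
        unfolding X_def b_def cst_def restr_def by (intro ext) (auto simp: indicator_def)
      have "pr (restr (X v) (cst M (- v + inverse (real (Suc n))))) (restr (X v) a)"
      proof (rule H[OF XN])
        show "X v \<subseteq> A" unfolding X_def by auto
        fix x assume "x \<in> X v"
        then have "v = fl n g x" unfolding X_def by auto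
        moreover have "0 < inverse (real (Suc n))" by simp
        moreover have "fl n g x \<le> - h x" using fl_le[of n g x] by (simp add: g_def)
        ultimately show "h x < - v + inverse (real (Suc n))" by linarith
      qed
      then show "pr (restr (X v) (b n)) (restr (X v) a)" using e by simp
    qed
    then show ?thesis unfolding U .
  qed
  show ?thesis
  proof (rule lim_ge[OF _ restr_Linf[OF hM AM] restr_Linf[OF a AM] _ _ step])
    show "restr A (b n) \<in> L" for n using restr_Linf[OF bL AM] .
    show "\<bar>restr A (b n) x\<bar> \<le> R + 2" if "x \<in> space M" for n x
    proof -
      have "\<bar>b n x\<bar> \<le> R + 2" using bB[OF that] .
      then show ?thesis unfolding restr_def by (auto simp: indicator_def)
    qed
    fix x assume x: "x \<in> space M"
    have "(\<lambda>n. b n x) \<longlonglongrightarrow> (- g x + 0) * 1"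
      unfolding b_def using x
      by (intro tendsto_mult tendsto_add tendsto_minus fl_lim LIMSEQ_inverse_real_of_nat) auto
    then show "(\<lambda>n. restr A (b n) x) \<longlonglongrightarrow> restr A h x"
      unfolding restr_def g_def by (auto intro: tendsto_mult_right)
  qed
qed

lemma mono_cst_lower:
  assumes B: "B \<in> sets M" and a: "a \<in> L" and c: "\<And>x. x \<in> B \<Longrightarrow> c \<le> a x"
  shows "pr (restr B a) (restr B (cst M c))"
proof (rule LC_upper[OF subalgebra_refl a B cst_Linf])
  fix B' c' assume B': "B' \<in> sets M" "B' \<subseteq> B" and lt: "\<And>x. x \<in> B' \<Longrightarrow> a x < c'"
  show "pr (restr B' (cst M c')) (restr B' (cst M c))"
  proof (cases "B' = {}")
    case True then show ?thesis using refl[OF zero_Linf] by (simp add: restr_empty)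
  next
    case False
    then obtain x where "x \<in> B'" by auto
    then have "c \<le> c'" using c lt B'(2) by (meson less_imp_le order_trans subsetD)
    then show ?thesis using cst_mono[OF B'(1)] by auto
  qed
qed

lemma mono_cst_upper:
  assumes B: "B \<in> sets M" and a: "a \<in> L" and c: "\<And>x. x \<in> B \<Longrightarrow> a x \<le> c"
  shows "pr (restr B (cst M c)) (restr B a)"
proof (rule LC_lower[OF subalgebra_refl a B cst_Linf])
  fix B' c' assume B': "B' \<in> sets M" "B' \<subseteq> B" and lt: "\<And>x. x \<in> B' \<Longrightarrow> c' < a x"
  show "pr (restr B' (cst M c)) (restr B' (cst M c'))"
  proof (cases "B' = {}")
    case True then show ?thesis using refl[OF zero_Linf] by (simp add: restr_empty)
  next
    case False
    then obtain x where "x \<in> B'" by auto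
    then have "c' \<le> c" using c lt B'(2) by (meson less_imp_le order_trans subsetD)
    then show ?thesis using cst_mono[OF B'(1)] by auto
  qed
qed

lemma mono_gen:
  assumes B: "B \<in> sets M" and a: "a \<in> L" and b: "b \<in> L" and le: "\<And>x. x \<in> B \<Longrightarrow> b x \<le> a x"
  shows "pr (restr B a) (restr B b)"
proof (rule LC_lower[OF subalgebra_refl b B a])
  fix B' c assume B': "B' \<in> sets M" "B' \<subseteq> B" and lt: "\<And>x. x \<in> B' \<Longrightarrow> c < b x"
  show "pr (restr B' a) (restr B' (cst M c))"
    by (rule mono_cst_lower[OF B'(1) a]) (use lt le B'(2) in \<open>force\<close>)
qed

end


context pref begin

lemma pc1:
  assumes fs: "\<And>n. fs n \<in> L" and f: "f \<in> L" and g: "g \<in> L"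
    and B: "\<And>n x. x \<in> space M \<Longrightarrow> \<bar>fs n x\<bar> \<le> C"
    and conv: "\<And>x. x \<in> space M \<Longrightarrow> (\<lambda>n. fs n x) \<longlonglongrightarrow> f x"
    and s: "strict_pref pr g f"
  shows "\<exists>N. \<forall>n>N. strict_pref pr g (fs n)"
proof -
  have "\<exists>C. \<forall>n. \<forall>x\<in>space M. \<bar>fs n x\<bar> \<le> C" using B by blast
  then show ?thesis using pc[unfolded PC_def, rule_format, of fs f g] fs f g conv s by blast
qed

lemma cst_sp: "restr (space M) (cst M c) = cst M c" using restr_space[OF cst_Linf] .

lemma cst_strict_sp: "y < x \<Longrightarrow> strict_pref pr (cst M x) (cst M y)"
  using strict_cst[OF sets.top nonnull] by (simp add: cst_sp)

lemma cst_mono_sp: "y \<le> x \<Longrightarrow> pr (cst M x) (cst M y)"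
  using cst_mono[OF sets.top] by (simp add: cst_sp)

lemma cst_zero: "cst M 0 = (\<lambda>_. 0)" by (simp add: cst_def)

definition mu :: "'a set \<Rightarrow> real" where
  "mu A = Sup {t. pr (restr A (cst M 1)) (cst M t)}"

lemma ind_L: "A \<in> sets M \<Longrightarrow> restr A (cst M 1) \<in> L" using restr_Linf[OF cst_Linf] .

lemma S_0: assumes A: "A \<in> sets M" shows "pr (restr A (cst M 1)) (cst M 0)"
proof -
  have "pr (restr (space M) (restr A (cst M 1))) (restr (space M) (cst M 0))"
    by (rule mono_cst_lower[OF sets.top ind_L[OF A]]) (auto simp: restr_def cst_def indicator_def)
  then show ?thesis using restr_space[OF ind_L[OF A]] cst_sp by simp
qed

lemma ind_le1: assumes A: "A \<in> sets M" shows "pr (cst M 1) (restr A (cst M 1))"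
proof -
  have "pr (restr (space M) (cst M 1)) (restr (space M) (restr A (cst M 1)))"
    by (rule mono_cst_upper[OF sets.top ind_L[OF A]]) (auto simp: restr_def cst_def indicator_def)
  then show ?thesis using restr_space[OF ind_L[OF A]] cst_sp by simp
qed

lemma S_le1: assumes A: "A \<in> sets M" and t: "pr (restr A (cst M 1)) (cst M t)" shows "t \<le> 1"
proof (rule ccontr)
  assume "\<not> t \<le> 1"
  then have s: "strict_pref pr (cst M t) (cst M 1)" using cst_strict_sp by auto
  have "pr (cst M 1) (cst M t)" using trans[OF ind_le1[OF A] t cst_Linf ind_L[OF A] cst_Linf] .
  then show False using s by (simp add: strict_pref_def)
qed

lemma S_bdd: "A \<in> sets M \<Longrightarrow> bdd_above {t. pr (restr A (cst M 1)) (cst M t)}"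
  using S_le1 by (auto intro: bdd_aboveI[where M=1])

lemma S_ne: "A \<in> sets M \<Longrightarrow> {t. pr (restr A (cst M 1)) (cst M t)} \<noteq> {}"
  using S_0 by auto

lemma mu_ge0: "A \<in> sets M \<Longrightarrow> 0 \<le> mu A"
  unfolding mu_def by (rule cSup_upper) (use S_0 S_bdd in auto)

lemma mu_le1: "A \<in> sets M \<Longrightarrow> mu A \<le> 1"
  unfolding mu_def by (rule cSup_least) (use S_ne S_le1 in auto)

lemma mu_pr: assumes A: "A \<in> sets M" shows "pr (restr A (cst M 1)) (cst M (mu A))"
proof -
  let ?S = "{t. pr (restr A (cst M 1)) (cst M t)}"
  have "\<exists>t\<in>?S. mu A - inverse (real (Suc n)) < t" for n
  proof -
    have "mu A - inverse (real (Suc n)) < Sup ?S" unfolding mu_def[symmetric] by simp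
    then show ?thesis using less_cSup_iff[OF S_ne[OF A] S_bdd[OF A]] by blast
  qed
  then obtain t where t: "\<And>n. t n \<in> ?S" "\<And>n. mu A - inverse (real (Suc n)) < t n" by metis
  have tle: "t n \<le> mu A" for n unfolding mu_def by (rule cSup_upper) (use t S_bdd[OF A] in auto)
  have tlim: "t \<longlonglongrightarrow> mu A"
  proof (rule real_tendsto_sandwich)
    show "\<forall>\<^sub>F n in sequentially. mu A - inverse (real (Suc n)) \<le> t n"
      by (intro always_eventually allI less_imp_le t)
    show "\<forall>\<^sub>F n in sequentially. t n \<le> mu A" by (intro always_eventually allI tle)
    show "(\<lambda>n. mu A - inverse (real (Suc n))) \<longlonglongrightarrow> mu A"
      using tendsto_diff[OF tendsto_const LIMSEQ_inverse_real_of_nat] by simp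
  qed simp
  have tb: "\<bar>t n\<bar> \<le> 2" for n
  proof -
    have "t n \<le> 1" using S_le1[OF A] t(1)[of n] by auto
    moreover have "inverse (real (Suc n)) \<le> 1" by (simp add: inverse_le_1_iff)
    ultimately show ?thesis using t(2)[of n] mu_ge0[OF A] by linarith
  qed
  show ?thesis
  proof (rule lim_le[OF cst_Linf cst_Linf ind_L[OF A]])
    show "\<bar>cst M (t n) x\<bar> \<le> 2" if "x \<in> space M" for n x using tb[of n] that by (simp add: cst_def)
    show "(\<lambda>n. cst M (t n) x) \<longlonglongrightarrow> cst M (mu A) x" if "x \<in> space M" for x
      using tlim that by (simp add: cst_def)
    show "pr (restr A (cst M 1)) (cst M (t n))" for n using t(1)[of n] by simp
  qed
qed

lemma mu_mono: assumes A: "A \<in> sets M" and B: "B \<in> sets M" and AB: "A \<subseteq> B" shows "mu A \<le> mu B"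
proof -
  have "pr (restr (space M) (restr B (cst M 1))) (restr (space M) (restr A (cst M 1)))"
    by (rule mono_gen[OF sets.top ind_L[OF B] ind_L[OF A]]) (use AB in \<open>auto simp: restr_def cst_def indicator_def\<close>)
  then have BA: "pr (restr B (cst M 1)) (restr A (cst M 1))" using restr_space[OF ind_L[OF A]] restr_space[OF ind_L[OF B]] by simp
  have "{t. pr (restr A (cst M 1)) (cst M t)} \<subseteq> {t. pr (restr B (cst M 1)) (cst M t)}"
    using trans[OF BA _ ind_L[OF B] ind_L[OF A] cst_Linf] by auto
  then show ?thesis unfolding mu_def by (rule cSup_subset_mono[OF S_ne[OF A] S_bdd[OF B]])
qed

lemma mu_pos: assumes A: "A \<in> sets M" "A \<notin> null_events M pr" shows "0 < mu A"
proof -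
  have s: "strict_pref pr (restr A (cst M 1)) (cst M 0)"
    using strict_cst[OF A, of 0 1] by (simp add: cst_zero restr_def)
  obtain N where N: "\<forall>n>N. strict_pref pr (restr A (cst M 1)) (cst M (inverse (real (Suc n))))"
  proof -
    have "\<exists>N. \<forall>n>N. strict_pref pr (restr A (cst M 1)) (cst M (inverse (real (Suc n))))"
    proof (rule pc1[OF cst_Linf cst_Linf ind_L[OF A(1)] _ _ s])
      show "\<bar>cst M (inverse (real (Suc n))) x\<bar> \<le> 1" for n x
        by (simp add: cst_def indicator_def inverse_le_1_iff)
      show "(\<lambda>n. cst M (inverse (real (Suc n))) x) \<longlonglongrightarrow> cst M 0 x" for x
        unfolding cst_def using tendsto_mult_right[OF LIMSEQ_inverse_real_of_nat] by simp
    qed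
    then show ?thesis using that by blast
  qed
  then have "pr (restr A (cst M 1)) (cst M (inverse (real (Suc (Suc N)))))"
    by (auto simp: strict_pref_def)
  then have "inverse (real (Suc (Suc N))) \<le> mu A"
    unfolding mu_def by (intro cSup_upper) (use S_bdd[OF A(1)] in auto)
  moreover have "0 < inverse (real (Suc (Suc N)))" by simp
  ultimately show ?thesis by linarith
qed

lemma no_disj_seq:
  fixes C :: "nat \<Rightarrow> 'a set"
  assumes C: "\<And>n. C n \<in> sets M" and d: "disjoint_family C" and e: "0 < \<epsilon>"
    and big: "\<And>n. \<epsilon> \<le> mu (C n)"
  shows False
proof -
  define T where "T k = (\<Union>n\<in>{k..}. C n)" for k
  have T: "T k \<in> sets M" for k unfolding T_def using C by (intro sets.countable_UN) auto
  have ge: "pr (restr (T k) (cst M 1)) (cst M (\<epsilon>/2))" for k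
  proof -
    have "mu (C k) \<le> mu (T k)" by (rule mu_mono[OF C T]) (auto simp: T_def)
    then have le: "\<epsilon>/2 \<le> mu (T k)" using big[of k] e by linarith
    show ?thesis using trans[OF mu_pr[OF T] cst_mono_sp[OF le] ind_L[OF T] cst_Linf cst_Linf] .
  qed
  have s: "strict_pref pr (cst M (\<epsilon>/2)) (cst M 0)" using cst_strict_sp e by simp
  obtain N where N: "\<forall>k>N. strict_pref pr (cst M (\<epsilon>/2)) (restr (T k) (cst M 1))"
  proof -
    have "\<exists>N. \<forall>k>N. strict_pref pr (cst M (\<epsilon>/2)) (restr (T k) (cst M 1))"
    proof (rule pc1[OF ind_L[OF T] cst_Linf cst_Linf _ _ s])
      show "\<bar>restr (T n) (cst M 1) x\<bar> \<le> 1" for n x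
        by (simp add: cst_def restr_def indicator_def)
      fix x assume x: "x \<in> space M"
      show "(\<lambda>k. restr (T k) (cst M 1) x) \<longlonglongrightarrow> cst M 0 x"
      proof (cases "\<exists>i. x \<in> C i")
        case True
        then obtain i where i: "x \<in> C i" by auto
        have "x \<notin> T k" if "k > i" for k
        proof
          assume "x \<in> T k"
          then obtain n where "n \<ge> k" "x \<in> C n" unfolding T_def by auto
          then have "n \<noteq> i" using that by auto
          then show False using d i \<open>x \<in> C n\<close> unfolding disjoint_family_on_def by blast
        qed
        then have "eventually (\<lambda>k. restr (T k) (cst M 1) x = cst M 0 x) sequentially"
          unfolding eventually_sequentially
          by (intro exI[of _ "Suc i"]) (auto simp: restr_def cst_def)
        then show ?thesis by (rule tendsto_eventually)
      next
        case False
        then have "restr (T k) (cst M 1) x = cst M 0 x" for k by (auto simp: T_def restr_def cst_def)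
        then show ?thesis by simp
      qed
    qed
    then show ?thesis using that by blast
  qed
  then show False using ge[of "Suc N"] by (auto simp: strict_pref_def)
qed

lemma greedy:
  assumes Csub: "\<CC> \<subseteq> sets M" and e: "{} \<in> \<CC>"
    and U: "\<And>D::nat \<Rightarrow> 'a set. (\<And>n. D n \<in> \<CC>) \<Longrightarrow> disjoint_family D \<Longrightarrow> (\<Union>n. D n) \<in> \<CC>"
  shows "\<exists>Cs\<in>\<CC>. \<forall>C\<in>\<CC>. C \<inter> Cs = {} \<longrightarrow> C \<in> null_events M pr"
proof -
  define \<sigma> where "\<sigma> S = Sup (mu ` {C \<in> \<CC>. C \<inter> S = {}})" for S
  have Zne: "mu ` {C \<in> \<CC>. C \<inter> S = {}} \<noteq> {}" for S using e by auto
  have Zbdd: "bdd_above (mu ` {C \<in> \<CC>. C \<inter> S = {}})" for S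
    using mu_le1 Csub by (intro bdd_aboveI[where M=1]) auto
  have ex: "\<exists>C. C \<in> \<CC> \<and> C \<inter> S = {} \<and> \<sigma> S / 2 \<le> mu C" for S
  proof (cases "\<sigma> S > 0")
    case True
    then have "\<sigma> S / 2 < Sup (mu ` {C \<in> \<CC>. C \<inter> S = {}})" unfolding \<sigma>_def by simp
    then obtain C where "C \<in> \<CC>" "C \<inter> S = {}" "\<sigma> S / 2 < mu C"
      using less_cSup_iff[OF Zne Zbdd] by auto
    then show ?thesis by (auto intro: less_imp_le)
  next
    case False
    then show ?thesis using e mu_ge0[of "{}"] by (intro exI[of _ "{}"]) auto
  qed
  then obtain pick where pick: "\<And>S. pick S \<in> \<CC>" "\<And>S. pick S \<inter> S = {}" "\<And>S. \<sigma> S / 2 \<le> mu (pick S)"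
    by metis
  define Sq where "Sq = rec_nat {} (\<lambda>_ S. S \<union> pick S)"
  have Sq0: "Sq 0 = {}" and SqS: "Sq (Suc n) = Sq n \<union> pick (Sq n)" for n by (simp_all add: Sq_def)
  define D where "D n = pick (Sq n)" for n
  have SqU: "Sq n = (\<Union>i<n. D i)" for n
    by (induction n) (auto simp: Sq0 SqS D_def lessThan_Suc)
  have DC: "D n \<in> \<CC>" for n unfolding D_def using pick(1) .
  have disj: "disjoint_family D"
    unfolding disjoint_family_on_def
  proof (intro ballI impI)
    fix i j :: nat assume "i \<noteq> j"
    have *: "D i \<inter> D j = {}" if "i < j" for i j
    proof -
      have "D i \<subseteq> Sq j" using that by (auto simp: SqU)
      moreover have "D j \<inter> Sq j = {}" unfolding D_def using pick(2) .
      ultimately show ?thesis by auto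
    qed
    show "D i \<inter> D j = {}" using *[of i j] *[of j i] \<open>i \<noteq> j\<close> by (cases "i < j") auto
  qed
  define Cs where "Cs = (\<Union>n. D n)"
  have CsC: "Cs \<in> \<CC>" unfolding Cs_def using U[OF DC disj] .
  have "C \<in> null_events M pr" if C: "C \<in> \<CC>" "C \<inter> Cs = {}" for C
  proof (rule ccontr)
    assume nn: "C \<notin> null_events M pr"
    have CM: "C \<in> sets M" using C Csub by auto
    have pos: "0 < mu C" using mu_pos[OF CM nn] .
    have "mu C / 2 \<le> mu (D n)" for n
    proof -
      have "C \<inter> Sq n = {}" using C(2) unfolding Cs_def SqU by auto
      then have "mu C \<le> \<sigma> (Sq n)" unfolding \<sigma>_def by (intro cSup_upper[OF _ Zbdd]) (use C in auto)
      then show ?thesis using pick(3)[of "Sq n"] unfolding D_def by linarith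
    qed
    then show False using no_disj_seq[of D "mu C / 2"] DC Csub disj pos by auto
  qed
  then show ?thesis using CsC by blast
qed

end


definition Acl :: "'a measure \<Rightarrow> 'a measure \<Rightarrow> (('a \<Rightarrow> real) \<Rightarrow> ('a \<Rightarrow> real) \<Rightarrow> bool) \<Rightarrow> ('a \<Rightarrow> real) \<Rightarrow> real \<Rightarrow> 'a set set" where
  "Acl M N pr f t = {A \<in> sets N. \<forall>B\<in>sets N. B \<subseteq> A \<longrightarrow> pr (restr B f) (restr B (cst M t))}"

context pref begin

context
  fixes N :: "'a measure" and f :: "'a \<Rightarrow> real"
  assumes N: "subalgebra M N" and fL: "f \<in> L"
begin

lemma spN: "space N = space M" using N by (simp add: subalgebra_def)
lemma sN: "A \<in> sets N \<Longrightarrow> A \<in> sets M" using sets_sub[OF N] .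

lemma Acl_N: "A \<in> Acl M N pr f t \<Longrightarrow> A \<in> sets N" by (simp add: Acl_def)

lemma Acl_empty: "{} \<in> Acl M N pr f t"
  unfolding Acl_def using refl[OF zero_Linf] by (auto simp: restr_empty)

lemma Acl_hered: "A \<in> Acl M N pr f t \<Longrightarrow> B \<in> sets N \<Longrightarrow> B \<subseteq> A \<Longrightarrow> B \<in> Acl M N pr f t"
  unfolding Acl_def by auto

lemma Acl_disj_UN:
  fixes D :: "nat \<Rightarrow> 'a set"
  assumes D: "\<And>n. D n \<in> Acl M N pr f t" and d: "disjoint_family D"
  shows "(\<Union>n. D n) \<in> Acl M N pr f t"
proof -
  have DN: "D n \<in> sets N" for n using D Acl_N by auto
  have UN: "(\<Union>n. D n) \<in> sets N" using DN by (intro sets.countable_UN) auto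
  have "pr (restr B f) (restr B (cst M t))" if B: "B \<in> sets N" "B \<subseteq> (\<Union>n. D n)" for B
  proof -
    define X where "X n = B \<inter> D n" for n
    have XN: "X n \<in> sets N" for n unfolding X_def using B DN by auto
    have "pr (restr (\<Union>n. X n) f) (restr (\<Union>n. X n) (cst M t))"
    proof (rule count_agg[OF _ _ fL cst_Linf])
      show "X n \<in> sets M" for n using sN[OF XN] .
      show "disjoint_family X" using d unfolding X_def disjoint_family_on_def by auto
      show "pr (restr (X n) f) (restr (X n) (cst M t))" for n
        using D[of n] XN[of n] unfolding Acl_def X_def by auto
    qed
    moreover have "(\<Union>n. X n) = B" using B unfolding X_def by auto
    ultimately show ?thesis by simp
  qed
  then show ?thesis using UN unfolding Acl_def by auto
qed

lemma Acl_UN: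
  fixes D :: "nat \<Rightarrow> 'a set"
  assumes D: "\<And>n. D n \<in> Acl M N pr f t"
  shows "(\<Union>n. D n) \<in> Acl M N pr f t"
proof -
  have DN: "range D \<subseteq> sets N" using D Acl_N by auto
  have "(\<Union>n. disjointed D n) \<in> Acl M N pr f t"
  proof (rule Acl_disj_UN)
    show "disjointed D n \<in> Acl M N pr f t" for n
      using Acl_hered[OF D[of n] _ disjointed_subset[of D n]] sets.range_disjointed_sets[OF DN] by auto
  qed (rule disjoint_family_disjointed)
  then show ?thesis by (simp add: UN_disjointed_eq)
qed

lemma Acl_UN_countable:
  assumes "countable I" "\<And>i. i \<in> I \<Longrightarrow> D i \<in> Acl M N pr f t"
  shows "(\<Union>i\<in>I. D i) \<in> Acl M N pr f t"
proof (cases "I = {}")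
  case True then show ?thesis using Acl_empty by simp
next
  case False
  have "(\<Union>i\<in>I. D i) = (\<Union>n. D (from_nat_into I n))"
    using range_from_nat_into[OF False assms(1)] by (metis image_image)
  also have "\<dots> \<in> Acl M N pr f t"
    by (rule Acl_UN) (use assms(2) from_nat_into[OF False] in auto)
  finally show ?thesis .
qed

lemma Acl_anti: "s \<le> t \<Longrightarrow> A \<in> Acl M N pr f t \<Longrightarrow> A \<in> Acl M N pr f s"
  unfolding Acl_def
proof (safe)
  fix B assume st: "s \<le> t" and A: "A \<in> sets N" and H: "\<forall>B\<in>sets N. B \<subseteq> A \<longrightarrow> pr (restr B f) (restr B (cst M t))"
    and B: "B \<in> sets N" "B \<subseteq> A"
  show "pr (restr B f) (restr B (cst M s))"
    using trans[OF H[rule_format, OF B] cst_mono[OF sN[OF B(1)] st]] restr_Linf fL cst_Linf sN[OF B(1)] by blast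
qed

lemma Acl_greedy: "\<exists>E\<in>Acl M N pr f t. \<forall>C\<in>Acl M N pr f t. C \<inter> E = {} \<longrightarrow> C \<in> null_events M pr"
proof (rule greedy)
  show "Acl M N pr f t \<subseteq> sets M" using Acl_N sN by auto
qed (use Acl_empty Acl_disj_UN in auto)

lemma dichotomy:
  assumes B: "B \<in> sets N" and s: "strict_pref pr (restr B f) (restr B (cst M t))"
  shows "\<exists>B'\<in>Acl M N pr f t. B' \<subseteq> B \<and> B' \<notin> null_events M pr"
proof -
  define \<CC> where "\<CC> = {C \<in> sets N. C \<subseteq> B \<and> pr (restr C (cst M t)) (restr C f)}"
  have "\<exists>Cs\<in>\<CC>. \<forall>C\<in>\<CC>. C \<inter> Cs = {} \<longrightarrow> C \<in> null_events M pr"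
  proof (rule greedy)
    show "\<CC> \<subseteq> sets M" unfolding \<CC>_def using sN by auto
    show "{} \<in> \<CC>" unfolding \<CC>_def using refl[OF zero_Linf] by (auto simp: restr_empty)
    fix D :: "nat \<Rightarrow> 'a set" assume D: "\<And>n. D n \<in> \<CC>" and d: "disjoint_family D"
    have DN: "D n \<in> sets N" for n using D unfolding \<CC>_def by auto
    have "pr (restr (\<Union>n. D n) (cst M t)) (restr (\<Union>n. D n) f)"
      by (rule count_agg[OF _ d cst_Linf fL]) (use D sN in \<open>auto simp: \<CC>_def\<close>)
    moreover have "(\<Union>n. D n) \<in> sets N" using DN by (intro sets.countable_UN) auto
    ultimately show "(\<Union>n. D n) \<in> \<CC>" using D unfolding \<CC>_def by auto
  qed
  then obtain Cs where Cs: "Cs \<in> \<CC>" and CsP: "\<And>C. C \<in> \<CC> \<Longrightarrow> C \<inter> Cs = {} \<Longrightarrow> C \<in> null_events M pr"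
    by blast
  have CsN: "Cs \<in> sets N" and CsB: "Cs \<subseteq> B" and CsPr: "pr (restr Cs (cst M t)) (restr Cs f)"
    using Cs unfolding \<CC>_def by auto
  define B' where "B' = B - Cs"
  have B'N: "B' \<in> sets N" unfolding B'_def using B CsN by auto
  have nn: "B' \<notin> null_events M pr"
  proof
    assume nul: "B' \<in> null_events M pr"
    have "pr (restr (Cs \<union> B') (cst M t)) (restr (Cs \<union> B') f)"
      by (rule two_agg[OF sN[OF CsN] sN[OF B'N] _ cst_Linf fL CsPr null_restr[OF nul cst_Linf fL]])
        (auto simp: B'_def)
    moreover have "Cs \<union> B' = B" using CsB unfolding B'_def by auto
    ultimately show False using s by (simp add: strict_pref_def)
  qed
  have "B' \<in> Acl M N pr f t"
    unfolding Acl_def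
  proof (safe)
    show "B' \<in> sets N" using B'N .
    fix C assume C: "C \<in> sets N" "C \<subseteq> B'"
    show "pr (restr C f) (restr C (cst M t))"
    proof (rule ccontr)
      assume np: "\<not> pr (restr C f) (restr C (cst M t))"
      then have "pr (restr C (cst M t)) (restr C f)"
        using total[OF restr_Linf[OF fL sN[OF C(1)]] restr_Linf[OF cst_Linf sN[OF C(1)]]] by auto
      then have "C \<in> \<CC>" using C unfolding \<CC>_def B'_def by auto
      moreover have "C \<inter> Cs = {}" using C unfolding B'_def by auto
      ultimately have "C \<in> null_events M pr" using CsP by auto
      then show False using np null_restr[OF _ fL cst_Linf] by auto
    qed
  qed
  then show ?thesis using nn unfolding B'_def by auto
qed


lemma exists_chisini: "\<exists>g. g \<in> chisini N pr f"
proof -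
  obtain R where R: "\<forall>x\<in>space M. \<bar>f x\<bar> \<le> R" "R \<ge> 0" using Linf_bounded[OF fL] by auto
  obtain E where E: "\<And>t. E t \<in> Acl M N pr f t"
    and EP: "\<And>t C. C \<in> Acl M N pr f t \<Longrightarrow> C \<inter> E t = {} \<Longrightarrow> C \<in> null_events M pr"
    using Acl_greedy by metis
  have EN: "E t \<in> sets N" for t using Acl_N[OF E] .
  have Esp: "E t \<subseteq> space M" for t using sets.sets_into_space[OF sN[OF EN]] .
  define Q where "Q = {q \<in> \<rat>. - R \<le> q \<and> q \<le> R}"
  have cQ: "countable {q \<in> Q. P q}" for P unfolding Q_def by (rule countable_subset[OF _ countable_rat]) auto
  define T where "T x = {q \<in> Q. x \<in> E q} \<union> {- R}" for x
  have Tne: "T x \<noteq> {}" for x unfolding T_def by auto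
  have Tbdd: "bdd_above (T x)" for x unfolding T_def Q_def using R(2) by (intro bdd_aboveI[where M=R]) auto
  define g where "g x = (if x \<in> space M then Sup (T x) else 0)" for x
  have G1: "- R \<le> g x \<and> g x \<le> R" if "x \<in> space M" for x
  proof
    have "- R \<in> T x" unfolding T_def by auto
    then show "- R \<le> g x" unfolding g_def using that cSup_upper[OF _ Tbdd] by auto
    show "g x \<le> R" unfolding g_def using that R(2) by (auto intro!: cSup_least Tne simp: T_def Q_def)
  qed
  have G2: "q \<le> g x" if "q \<in> Q" "x \<in> E q" "x \<in> space M" for q x
  proof -
    have "q \<in> T x" unfolding T_def using that by auto
    then show ?thesis unfolding g_def using that cSup_upper[OF _ Tbdd] by auto
  qed
  have G3: "\<exists>q\<in>Q. t < q \<and> x \<in> E q" if x: "x \<in> space M" and t: "t < g x" "- R \<le> t" for x t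
  proof -
    have "t < Sup (T x)" using t x unfolding g_def by simp
    then obtain q where "q \<in> T x" "t < q" using less_cSup_iff[OF Tne Tbdd] by blast
    then show ?thesis using t unfolding T_def by auto
  qed
  have gmeas: "g \<in> borel_measurable N"
    unfolding borel_measurable_iff_greater
  proof
    fix a
    show "{w \<in> space N. a < g w} \<in> sets N"
    proof (cases "a < - R")
      case True
      then have "{w \<in> space N. a < g w} = space N" using G1 spN by fastforce
      then show ?thesis by simp
    next
      case False
      have "{w \<in> space N. a < g w} = (\<Union>q\<in>{q \<in> Q. a < q}. E q)"
      proof
        show "{w \<in> space N. a < g w} \<subseteq> (\<Union>q\<in>{q \<in> Q. a < q}. E q)"
          using G3 False spN by fastforce
        show "(\<Union>q\<in>{q \<in> Q. a < q}. E q) \<subseteq> {w \<in> space N. a < g w}"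
          using G2 Esp spN by fastforce
      qed
      also have "\<dots> \<in> sets N" by (rule sets.countable_UN'') (use cQ EN in auto)
      finally show ?thesis .
    qed
  qed
  have gN: "g \<in> Linf N"
  proof (rule LinfI[where R=R])
    show "g \<in> borel_measurable N" using gmeas .
    show "\<bar>g x\<bar> \<le> R" if "x \<in> space N" for x using G1[of x] that spN by auto
    show "g x = 0" if "x \<notin> space N" for x using that spN by (simp add: g_def)
  qed
  have gL: "g \<in> L" using Linf_sub[OF N gN] .
  have lower: "pr (restr B f) (restr B (cst M c))" if B: "B \<in> sets N" and c: "\<And>x. x \<in> B \<Longrightarrow> c < g x" for B c
  proof (cases "c < - R")
    case True
    have sB: "B \<subseteq> space M" using sets.sets_into_space[OF sN[OF B]] .
    show ?thesis
      by (rule mono_cst_lower[OF sN[OF B] fL]) (use True R sB in force)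
  next
    case False
    have sB: "B \<subseteq> space M" using sets.sets_into_space[OF sN[OF B]] .
    have "(\<Union>q\<in>{q \<in> Q. c < q}. E q) \<in> Acl M N pr f c"
    proof (rule Acl_UN_countable[OF cQ])
      fix q assume "q \<in> {q \<in> Q. c < q}"
      then have "c < q" by simp
      then show "E q \<in> Acl M N pr f c" using Acl_anti[OF less_imp_le E[of q]] by simp
    qed
    moreover have "B \<subseteq> (\<Union>q\<in>{q \<in> Q. c < q}. E q)"
      using G3 c False sB by fastforce
    ultimately show ?thesis using B unfolding Acl_def by auto
  qed
  have upper: "pr (restr B (cst M c)) (restr B f)" if B: "B \<in> sets N" and c: "\<And>x. x \<in> B \<Longrightarrow> g x < c" for B c
  proof (cases "R < c")
    case True
    have sB: "B \<subseteq> space M" using sets.sets_into_space[OF sN[OF B]] .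
    show ?thesis
      by (rule mono_cst_upper[OF sN[OF B] fL]) (use True R sB in force)
  next
    case False
    show ?thesis
    proof (rule ccontr)
      assume np: "\<not> pr (restr B (cst M c)) (restr B f)"
      then have "strict_pref pr (restr B f) (restr B (cst M c))"
        using total[OF restr_Linf[OF fL sN[OF B]] restr_Linf[OF cst_Linf sN[OF B]]]
        by (auto simp: strict_pref_def)
      then obtain B' where B': "B' \<in> Acl M N pr f c" "B' \<subseteq> B" "B' \<notin> null_events M pr"
        using dichotomy[OF B] by blast
      have B'N: "B' \<in> sets N" using Acl_N[OF B'(1)] .
      have sB': "B' \<subseteq> space M" using sets.sets_into_space[OF sN[OF B'N]] .
      define P where "P r = B' \<inter> {x \<in> space M. g x < r}" for r
      have PN: "P r \<in> sets N" for r
      proof -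
        have "{x \<in> space N. g x < r} \<in> sets N" using gmeas by measurable
        then show ?thesis unfolding P_def spN[symmetric] using B'N by auto
      qed
      have B'eq: "B' = (\<Union>r\<in>{r \<in> \<rat>. r < c}. P r)"
      proof
        show "B' \<subseteq> (\<Union>r\<in>{r \<in> \<rat>. r < c}. P r)"
        proof
          fix x assume x: "x \<in> B'"
          then have "g x < c" using c B'(2) by auto
          then obtain r where "r \<in> \<rat>" "g x < r" "r < c" using Rats_dense_in_real by blast
          then show "x \<in> (\<Union>r\<in>{r \<in> \<rat>. r < c}. P r)" using x sB' unfolding P_def by auto
        qed
        show "(\<Union>r\<in>{r \<in> \<rat>. r < c}. P r) \<subseteq> B'" unfolding P_def by auto
      qed
      have cnt: "countable {r \<in> \<rat>. r < c}" by (rule countable_subset[OF _ countable_rat]) auto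
      have "\<not> (\<forall>r\<in>{r \<in> \<rat>. r < c}. P r \<in> null_events M pr)"
      proof
        assume all: "\<forall>r\<in>{r \<in> \<rat>. r < c}. P r \<in> null_events M pr"
        have "(\<Union>r\<in>{r \<in> \<rat>. r < c}. P r) \<in> null_events M pr"
          by (rule null_UN_countable[OF cnt]) (use all in blast)
        then show False using B'eq B'(3) by simp
      qed
      then obtain r where r: "r \<in> \<rat>" "r < c" "P r \<notin> null_events M pr" by blast
      have "P r \<noteq> {}" using r(3) null_empty by auto
      then obtain x where x: "x \<in> P r" by auto
      have "- R < r" using x G1 unfolding P_def by fastforce
      then have rQ: "r \<in> Q" using r False unfolding Q_def by auto
      have "P r \<in> Acl M N pr f r"
        using Acl_hered[OF Acl_anti[OF less_imp_le[OF r(2)] B'(1)] PN] unfolding P_def by auto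
      moreover have "P r \<inter> E r = {}" using G2[OF rQ] unfolding P_def by fastforce
      ultimately show False using EP r(3) by auto
    qed
  qed
  have "g \<in> chisini N pr f"
    unfolding chisini_def
  proof (safe)
    show "g \<in> Linf N" using gN .
    fix A assume A: "A \<in> sets N"
    have 1: "pr (restr A f) (restr A g)"
      by (rule LC_lower[OF N gN A fL]) (use lower in auto)
    have 2: "pr (restr A g) (restr A f)"
      by (rule LC_upper[OF N gN A fL]) (use upper in auto)
    show "indiff pr (restr A f) (restr A g)" using 1 2 by (simp add: indiff_def)
  qed
  then show ?thesis by blast
qed

end

lemma half_null:
  assumes N: "subalgebra M N" and g1: "g1 \<in> Linf N" and g2: "g2 \<in> Linf N"
    and H: "\<And>A. A \<in> sets N \<Longrightarrow> pr (restr A g2) (restr A g1)"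
  shows "{x \<in> space M. g2 x < g1 x} \<in> null_events M pr"
proof -
  have spN: "space N = space M" using N by (simp add: subalgebra_def)
  have g1L: "g1 \<in> L" and g2L: "g2 \<in> L" using Linf_sub[OF N] g1 g2 by auto
  define F where "F p = {x \<in> space M. real (Suc (snd p)) * g2 x \<le> of_int (fst p) \<and> of_int (fst p) + 1 \<le> real (Suc (snd p)) * g1 x}" for p :: "int \<times> nat"
  have FN: "F p \<in> sets N" for p
  proof -
    have h1: "(\<lambda>x. real (Suc (snd p)) * g1 x) \<in> borel_measurable N"
      using Linf_meas[OF g1] by (rule borel_measurable_times[OF borel_measurable_const])
    have h2: "(\<lambda>x. real (Suc (snd p)) * g2 x) \<in> borel_measurable N"
      using Linf_meas[OF g2] by (rule borel_measurable_times[OF borel_measurable_const])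
    have c1: "(\<lambda>x. of_int (fst p) :: real) \<in> borel_measurable N" by (rule borel_measurable_const)
    have c2: "(\<lambda>x. of_int (fst p) + 1 :: real) \<in> borel_measurable N" by (rule borel_measurable_const)
    have "{x \<in> space N. real (Suc (snd p)) * g2 x \<le> of_int (fst p)} \<inter> {x \<in> space N. of_int (fst p) + 1 \<le> real (Suc (snd p)) * g1 x} \<in> sets N"
      using borel_measurable_le[OF h2 c1] borel_measurable_le[OF c2 h1] by (rule sets.Int)
    moreover have "F p = {x \<in> space N. real (Suc (snd p)) * g2 x \<le> of_int (fst p)} \<inter> {x \<in> space N. of_int (fst p) + 1 \<le> real (Suc (snd p)) * g1 x}"
      unfolding F_def spN by auto
    ultimately show ?thesis by simp
  qed
  have Fnull: "F p \<in> null_events M pr" for p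
  proof (rule ccontr)
    assume nn: "F p \<notin> null_events M pr"
    define m where "m = real (Suc (snd p))"
    have m: "0 < m" unfolding m_def by simp
    define q where "q = of_int (fst p) / m"
    define q' where "q' = (of_int (fst p) + 1) / m"
    have qq: "q < q'" unfolding q_def q'_def using m by (simp add: divide_strict_right_mono)
    have FM: "F p \<in> sets M" using sets_sub[OF N FN] .
    have a1: "pr (restr (F p) g1) (restr (F p) (cst M q'))"
    proof (rule mono_cst_lower[OF FM g1L])
      fix x assume "x \<in> F p"
      then have "of_int (fst p) + 1 \<le> m * g1 x" unfolding F_def m_def by auto
      then show "q' \<le> g1 x" unfolding q'_def using m by (simp add: divide_le_eq mult.commute)
    qed
    have a3: "pr (restr (F p) (cst M q)) (restr (F p) g2)"
    proof (rule mono_cst_upper[OF FM g2L])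
      fix x assume "x \<in> F p"
      then have "m * g2 x \<le> of_int (fst p)" unfolding F_def m_def by auto
      then show "g2 x \<le> q" unfolding q_def using m by (simp add: le_divide_eq mult.commute)
    qed
    have a2: "strict_pref pr (restr (F p) (cst M q')) (restr (F p) (cst M q))"
      using strict_cst[OF FM nn qq] .
    have a4: "pr (restr (F p) g2) (restr (F p) g1)" using H[OF FN] .
    have L1: "restr (F p) g1 \<in> L" "restr (F p) g2 \<in> L" "restr (F p) (cst M q) \<in> L" "restr (F p) (cst M q') \<in> L"
      using restr_Linf[OF _ FM] g1L g2L cst_Linf by auto
    have "pr (restr (F p) (cst M q)) (restr (F p) g1)" using trans[OF a3 a4 L1(3) L1(2) L1(1)] .
    then have "pr (restr (F p) (cst M q)) (restr (F p) (cst M q'))" using trans[OF _ a1 L1(3) L1(1) L1(4)] by blast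
    then show False using a2 by (simp add: strict_pref_def)
  qed
  have cover: "{x \<in> space M. g2 x < g1 x} \<subseteq> (\<Union>p\<in>UNIV. F p)"
  proof
    fix x assume x: "x \<in> {x \<in> space M. g2 x < g1 x}"
    then have "0 < (g1 x - g2 x) / 2" by auto
    then obtain n where n: "inverse (real (Suc n)) < (g1 x - g2 x) / 2" using reals_Archimedean by blast
    define m where "m = real (Suc n)"
    have m: "0 < m" unfolding m_def by simp
    have "2 < m * (g1 x - g2 x)" using n m unfolding m_def[symmetric] by (simp add: field_simps)
    define k where "k = \<lceil>m * g2 x\<rceil>"
    have k1: "m * g2 x \<le> of_int k" unfolding k_def by simp
    have k2: "of_int k < m * g2 x + 1" unfolding k_def by linarith
    have "m * (g1 x - g2 x) = m * g1 x - m * g2 x" by (simp add: right_diff_distrib)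
    then have "of_int k + 1 \<le> m * g1 x" using k2 \<open>2 < m * (g1 x - g2 x)\<close> by linarith
    then have "x \<in> F (k, n)" unfolding F_def using x k1 by (simp add: m_def)
    then show "x \<in> (\<Union>p\<in>UNIV. F p)" by auto
  qed
  have nU: "(\<Union>p\<in>UNIV. F p) \<in> null_events M pr"
    by (rule null_UN_countable) (use Fnull in auto)
  have g1m: "g1 \<in> borel_measurable N" using Linf_meas[OF g1] .
  have g2m: "g2 \<in> borel_measurable N" using Linf_meas[OF g2] .
  have "{x \<in> space N. g2 x < g1 x} \<in> sets N"
    by (rule borel_measurable_less[OF g2m g1m])
  then have mS: "{x \<in> space M. g2 x < g1 x} \<in> sets M" using sets_sub[OF N] unfolding spN by blast
  show ?thesis using null_subset[OF mS cover nU] .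
qed

lemma uniq:
  assumes N: "subalgebra M N" and g1: "g1 \<in> chisini N pr f" and g2: "g2 \<in> chisini N pr f" and fL: "f \<in> L"
  shows "{x \<in> space M. g1 x \<noteq> g2 x} \<in> null_events M pr"
proof -
  have g1N: "g1 \<in> Linf N" and g2N: "g2 \<in> Linf N" using g1 g2 by (auto simp: chisini_def)
  have g1L: "g1 \<in> L" and g2L: "g2 \<in> L" using Linf_sub[OF N] g1N g2N by auto
  have i1: "indiff pr (restr A f) (restr A g1)" and i2: "indiff pr (restr A f) (restr A g2)" if "A \<in> sets N" for A
    using g1 g2 that by (auto simp: chisini_def)
  have p: "pr (restr A ga) (restr A gb)" if "A \<in> sets N" "ga \<in> {g1, g2}" "gb \<in> {g1, g2}" for A ga gb
  proof -
    have AM: "A \<in> sets M" using sets_sub[OF N that(1)] .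
    have h1: "pr (restr A ga) (restr A f)" and h2: "pr (restr A f) (restr A gb)"
      using i1[OF that(1)] i2[OF that(1)] that(2,3) by (auto simp: indiff_def)
    have m: "restr A ga \<in> L" "restr A gb \<in> L"
      using restr_Linf[OF g1L AM] restr_Linf[OF g2L AM] that(2,3) by auto
    show ?thesis using trans[OF h1 h2 m(1) restr_Linf[OF fL AM] m(2)] .
  qed
  have a: "{x \<in> space M. g2 x < g1 x} \<in> null_events M pr" by (rule half_null[OF N g1N g2N]) (use p in auto)
  have b: "{x \<in> space M. g1 x < g2 x} \<in> null_events M pr" by (rule half_null[OF N g2N g1N]) (use p in auto)
  have "{x \<in> space M. g1 x \<noteq> g2 x} = {x \<in> space M. g2 x < g1 x} \<union> {x \<in> space M. g1 x < g2 x}" by auto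
  then show ?thesis using null_Un[OF a b] by simp
qed

end


theorem mainTheorem6:
  fixes M N :: "'a measure"
    and pr :: "('a \<Rightarrow> real) \<Rightarrow> ('a \<Rightarrow> real) \<Rightarrow> bool"
    and f :: "'a \<Rightarrow> real"
  assumes "preference_order M pr"
    and "SM M pr" and "PC M pr" and "ST M pr"
    and "subalgebra M N"
    and "f \<in> Linf M"
  shows "chisini N pr f \<noteq> {} \<and>
    (\<forall>g\<in>chisini N pr f. \<forall>g'\<in>chisini N pr f.
        {x \<in> space M. g x \<noteq> g' x} \<in> null_events M pr)"
proof (cases "space M \<in> null_events M pr")
  case False
  interpret pref M pr using assms(1-4) False by (unfold_locales) auto
  show ?thesis using exists_chisini[OF assms(5,6)] uniq[OF assms(5) _ _ assms(6)] by blast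
next
  case True
  have ind: "indiff pr a b" if a: "a \<in> Linf M" and b: "b \<in> Linf M" for a b
  proof -
    have "paste M (space M) a b = a"
      using Linf_out[OF a] by (intro ext) (auto simp: paste_def indicator_def)
    moreover have "indiff pr (paste M (space M) a b) b" using True a b unfolding null_events_def by blast
    ultimately show ?thesis by simp
  qed
  have spN: "space N = space M" using assms(5) by (simp add: subalgebra_def)
  have z: "(\<lambda>_. 0) \<in> chisini N pr f"
    unfolding chisini_def
  proof (safe)
    show "(\<lambda>_. 0) \<in> Linf N" by (rule zero_Linf)
    fix A assume A: "A \<in> sets N"
    have AM: "A \<in> sets M" using sets_sub[OF assms(5) A] .
    show "indiff pr (restr A f) (restr A (\<lambda>_. 0))"
      by (rule ind) (use restr_Linf[OF assms(6) AM] restr_Linf[OF zero_Linf AM] in auto)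
  qed
  have "{x \<in> space M. g x \<noteq> g' x} \<in> null_events M pr" if g: "g \<in> chisini N pr f" and g': "g' \<in> chisini N pr f" for g g'
  proof -
    have gL: "g \<in> Linf M" and g'L: "g' \<in> Linf M"
      using g g' Linf_sub[OF assms(5)] by (auto simp: chisini_def)
    have "{x \<in> space M. g x \<noteq> g' x} \<in> sets M"
      using borel_measurable_neq[OF Linf_meas[OF gL] Linf_meas[OF g'L]] .
    moreover have "indiff pr (paste M {x \<in> space M. g x \<noteq> g' x} a b) b" if "a \<in> Linf M" "b \<in> Linf M" for a b
      by (rule ind) (use that calculation paste_Linf in auto)
    ultimately show ?thesis unfolding null_events_def by auto
  qed
  then show ?thesis using z by blast
qed


end
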